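(* Let $m,n\in\mathbb{Z}\setminus\{0\}$. Then the image of the modular function of $\mathrm{G}(m,n)$ is $\left|\frac{m}{n}\right|^{\mathbb{Z}}$.
   Context: $\mathrm{BS}(m,n) = \langle a,t \mid t a^m t^{-1} = a^n\rangle$ is the Baumslag–Solitar group, in which $\langle a\rangle$ is commensurated. For a Hecke pair $\Lambda\leq\Gamma$ (i.e. $[\Lambda:\Lambda\cap g\Lambda g^{-1}]<\infty$ for all $g$), let $\iota:\Gamma\to\mathrm{Sym}(\Gamma/\Lambda)$ be the left multiplication action; with the topology of pointwise convergence on $\mathrm{Sym}(\Gamma/\Lambda)$, the Schlichting completion is $\Gamma/\!\!/\Lambda := \overline{\iota(\Gamma)}$, a totally disconnected locally compact group. $\mathrm{G}(m,n) := \mathrm{BS}(m,n)/\!\!/\langle a\rangle$. *)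

theory Defs
  imports "HOL-Algebra.Bij" "HOL-Algebra.Coset" Complex_Main
begin

datatype gen = A | T

type_synonym word = "(gen \<times> bool) list"  \<comment> \<open>letter (x, True) means x inverse\<close>

definition apow :: "int \<Rightarrow> word" where
  "apow k = (if 0 \<le> k then replicate (nat k) (A, False) else replicate (nat (- k)) (A, True))"

text \<open>Equality in BS(m,n) = < a, t | t a^m t^-1 = a^n >: the congruence on words generated
  by free cancellation and the defining relator.\<close>
inductive bs_eq :: "int \<Rightarrow> int \<Rightarrow> word \<Rightarrow> word \<Rightarrow> bool" for m n where
  bs_refl: "bs_eq m n w w"
| bs_sym: "bs_eq m n u v \<Longrightarrow> bs_eq m n v u"
| bs_trans: "bs_eq m n u v \<Longrightarrow> bs_eq m n v w \<Longrightarrow> bs_eq m n u w"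
| bs_ctx: "bs_eq m n u v \<Longrightarrow> bs_eq m n (x @ u @ y) (x @ v @ y)"
| bs_cancel: "bs_eq m n [(g, b), (g, \<not> b)] []"
| bs_rel: "bs_eq m n ([(T, False)] @ apow m @ [(T, True)]) (apow n)"

definition bs_coset :: "int \<Rightarrow> int \<Rightarrow> word \<Rightarrow> word set" where
  "bs_coset m n w = {v. \<exists>k. bs_eq m n v (w @ apow k)}"

definition bs_cosets :: "int \<Rightarrow> int \<Rightarrow> word set set" where
  "bs_cosets m n = range (bs_coset m n)"

definition bs_iota :: "int \<Rightarrow> int \<Rightarrow> word \<Rightarrow> word set \<Rightarrow> word set" where
  "bs_iota m n g = (\<lambda>C \<in> bs_cosets m n. {u. \<exists>v\<in>C. bs_eq m n u (g @ v)})"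

text \<open>Closure of iota(BS(m,n)) in Sym(BS(m,n)/<a>) for the topology of pointwise convergence
  (basic neighbourhoods of sigma: permutations agreeing with sigma on a finite set).\<close>
definition G_carrier :: "int \<Rightarrow> int \<Rightarrow> (word set \<Rightarrow> word set) set" where
  "G_carrier m n = {\<sigma> \<in> Bij (bs_cosets m n).
     \<forall>F. F \<subseteq> bs_cosets m n \<and> finite F \<longrightarrow> (\<exists>g. \<forall>x\<in>F. bs_iota m n g x = \<sigma> x)}"

definition Gmn :: "int \<Rightarrow> int \<Rightarrow> (word set \<Rightarrow> word set) monoid" where
  "Gmn m n = (BijGroup (bs_cosets m n))\<lparr>carrier := G_carrier m n\<rparr>"

text \<open>The compact open subgroup U = closure of iota(<a>) = stabiliser of the base coset <a>.\<close>
definition G_U :: "int \<Rightarrow> int \<Rightarrow> (word set \<Rightarrow> word set) set" where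
  "G_U m n = {\<sigma> \<in> G_carrier m n. \<sigma> (bs_coset m n []) = bs_coset m n []}"

definition sg_index :: "('a, 'b) monoid_scheme \<Rightarrow> 'a set \<Rightarrow> 'a set \<Rightarrow> nat" where
  "sg_index G H K = card ((\<lambda>h. K #>\<^bsub>G\<^esub> h) ` H)"

definition conj_set :: "('a, 'b) monoid_scheme \<Rightarrow> 'a \<Rightarrow> 'a set \<Rightarrow> 'a set" where
  "conj_set G g U = (\<lambda>u. g \<otimes>\<^bsub>G\<^esub> u \<otimes>\<^bsub>G\<^esub> inv\<^bsub>G\<^esub> g) ` U"

text \<open>Delta(g) = mu(g U g^-1) / mu(U) = [gUg^-1 : gUg^-1 \<inter> U] / [U : U \<inter> gUg^-1].\<close>
definition modular_fn :: "('a, 'b) monoid_scheme \<Rightarrow> 'a set \<Rightarrow> 'a \<Rightarrow> real" where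
  "modular_fn G U g =
     real (sg_index G (conj_set G g U) (conj_set G g U \<inter> U)) /
     real (sg_index G U (U \<inter> conj_set G g U))"

end

theory Submission
  imports Defs
begin

definition flip :: "gen \<times> bool \<Rightarrow> gen \<times> bool" where "flip x = (fst x, \<not> snd x)"
definition winv :: "word \<Rightarrow> word" where "winv w = rev (map flip w)"

lemma flip_flip[simp]: "flip (flip x) = x" by (simp add: flip_def)
lemma winv_Nil[simp]: "winv [] = []" by (simp add: winv_def)
lemma winv_Cons[simp]: "winv (x # w) = winv w @ [flip x]" by (simp add: winv_def)
lemma winv_append[simp]: "winv (u @ v) = winv v @ winv u" by (simp add: winv_def)
lemma winv_winv[simp]: "winv (winv w) = w" by (simp add: winv_def rev_map comp_def)

fun lt :: "int \<Rightarrow> int \<Rightarrow> gen \<times> bool \<Rightarrow> real \<Rightarrow> real" where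
  "lt m n (A, False) x = x + 1"
| "lt m n (A, True) x = x - 1"
| "lt m n (T, False) x = (real_of_int n / real_of_int m) * x"
| "lt m n (T, True) x = (real_of_int m / real_of_int n) * x"

fun lsl :: "int \<Rightarrow> int \<Rightarrow> gen \<times> bool \<Rightarrow> real" where
  "lsl m n (A, b) = 1"
| "lsl m n (T, False) = real_of_int n / real_of_int m"
| "lsl m n (T, True) = real_of_int m / real_of_int n"

fun ev :: "int \<Rightarrow> int \<Rightarrow> word \<Rightarrow> real \<Rightarrow> real" where
  "ev m n [] x = x"
| "ev m n (y # w) x = lt m n y (ev m n w x)"

definition slope :: "int \<Rightarrow> int \<Rightarrow> word \<Rightarrow> real" where
  "slope m n w = prod_list (map (lsl m n) w)"

lemma int_subgroup:
  fixes S :: "int set"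
  assumes add: "\<And>a b. a \<in> S \<Longrightarrow> b \<in> S \<Longrightarrow> a + b \<in> S"
    and neg: "\<And>a. a \<in> S \<Longrightarrow> - a \<in> S"
    and z: "0 \<in> S" and nz: "k \<in> S" "k \<noteq> 0"
  shows "\<exists>p>0. S = range (\<lambda>j. p * j)"
proof -
  have pos: "\<exists>k. k \<in> S \<and> k > 0"
    using nz neg by (cases "k > 0") (auto intro: exI[of _ "- k"])
  then obtain k0 where k0: "k0 \<in> S" "k0 > 0" by blast
  define P where "P = (\<lambda>i::nat. int i \<in> S \<and> 0 < i)"
  have P0: "P (nat k0)" using k0 by (simp add: P_def)
  define i where "i = (LEAST i. P i)"
  have i1: "P i" unfolding i_def by (rule LeastI[of P, OF P0])
  have i2: "int i \<le> k" if "k \<in> S" "k > 0" for k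
  proof -
    have "P (nat k)" using that by (simp add: P_def)
    then have "i \<le> nat k" unfolding i_def by (rule Least_le)
    then show ?thesis using that by simp
  qed
  have "\<exists>i::nat. (int i \<in> S \<and> int i > 0) \<and> (\<forall>k. k \<in> S \<and> k > 0 \<longrightarrow> int i \<le> k)"
    using i1 i2 unfolding P_def by auto
  then obtain i where i: "int i \<in> S" "int i > 0" "\<And>k. k \<in> S \<Longrightarrow> k > 0 \<Longrightarrow> int i \<le> k" by blast
  define q where "q = int i"
  have qpos: "q > 0" using i(2) unfolding q_def .
  have qmin: "\<And>k. k \<in> S \<Longrightarrow> k > 0 \<Longrightarrow> q \<le> k" using i(3) unfolding q_def .
  have qS: "q \<in> S" using i(1) unfolding q_def .
  have mult: "q * j \<in> S" for j
  proof (induction j rule: int_induct[where k = 0])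
    case base then show ?case using z by simp
  next
    case (step1 j) then show ?case using add[OF step1.IH qS] by (simp add: algebra_simps)
  next
    case (step2 j) then show ?case using add[OF step2.IH neg[OF qS]] by (simp add: algebra_simps)
  qed
  have "S = range (\<lambda>j. q * j)"
  proof
    show "range (\<lambda>j. q * j) \<subseteq> S" using mult by auto
  next
    show "S \<subseteq> range (\<lambda>j. q * j)"
    proof
      fix k assume k: "k \<in> S"
      have e: "k mod q = k + (- (q * (k div q)))" using minus_mult_div_eq_mod[of k q] by simp
      have km0: "k + (- (q * (k div q))) \<in> S" by (rule add[OF k neg[OF mult]])
      have km: "k mod q \<in> S" using km0 e by argo
      have "k mod q = 0"
      proof (rule ccontr)
        assume "k mod q \<noteq> 0"
        moreover have "k mod q \<ge> 0" using qpos by (rule pos_mod_sign)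
        ultimately have "k mod q > 0" by linarith
        then have "q \<le> k mod q" using qmin[OF km] by blast
        moreover have "k mod q < q" using qpos by (rule pos_mod_bound)
        ultimately show False by simp
      qed
      then have "k = q * (k div q)" using mult_div_mod_eq[of q k] by simp
      then show "k \<in> range (\<lambda>j. q * j)" by blast
    qed
  qed
  then show ?thesis using qpos by blast
qed

lemma card_image_rel:
  assumes "\<And>x y. x \<in> X \<Longrightarrow> y \<in> X \<Longrightarrow> f x = f y \<longleftrightarrow> g x = g y"
  shows "card (f ` X) = card (g ` X)"
proof -
  let ?h = "\<lambda>b. g (inv_into X f b)"
  have "bij_betw ?h (f ` X) (g ` X)"
  proof (rule bij_betw_imageI)
    show "inj_on ?h (f ` X)"
    proof
      fix b1 b2 assume b: "b1 \<in> f ` X" "b2 \<in> f ` X" "?h b1 = ?h b2"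
      have "inv_into X f b1 \<in> X" "inv_into X f b2 \<in> X"
        by (rule inv_into_into[OF b(1)], rule inv_into_into[OF b(2)])
      then have "f (inv_into X f b1) = f (inv_into X f b2)" using assms b(3) by blast
      then show "b1 = b2" using b by (simp add: f_inv_into_f)
    qed
    show "?h ` f ` X = g ` X"
    proof -
      have "?h (f a) = g a" if "a \<in> X" for a
      proof -
        have "inv_into X f (f a) \<in> X" "f (inv_into X f (f a)) = f a"
          using that by (auto simp: inv_into_into f_inv_into_f)
        then show ?thesis using assms that by blast
      qed
      then show ?thesis by (auto simp: image_comp)
    qed
  qed
  then show ?thesis by (rule bij_betw_same_card)
qed

definition stab :: "int \<Rightarrow> int \<Rightarrow> word set set \<Rightarrow> (word set \<Rightarrow> word set) set" where
  "stab m n Z = {\<tau> \<in> G_carrier m n. \<forall>z\<in>Z. \<tau> z = z}"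

locale BS = fixes m n :: int assumes m0: "m \<noteq> 0" and n0: "n \<noteq> 0"
begin

abbreviation beq :: "word \<Rightarrow> word \<Rightarrow> bool" where "beq u v \<equiv> bs_eq m n u v"

lemma beq_refl[simp]: "beq u u" by (rule bs_refl)
lemma beq_sym: "beq u v \<Longrightarrow> beq v u" by (rule bs_sym)
lemma beq_trans[trans]: "beq u v \<Longrightarrow> beq v w \<Longrightarrow> beq u w" by (rule bs_trans)

lemma beq_app: "beq u u' \<Longrightarrow> beq v v' \<Longrightarrow> beq (u @ v) (u' @ v')"
proof -
  assume a: "beq u u'" "beq v v'"
  have "beq ([] @ u @ v) ([] @ u' @ v)" by (rule bs_ctx[OF a(1)])
  moreover have "beq (u' @ v @ []) (u' @ v' @ [])" by (rule bs_ctx[OF a(2)])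
  ultimately show ?thesis by (auto intro: beq_trans)
qed

lemma beq_app3: "beq u u' \<Longrightarrow> beq (x @ u @ y) (x @ u' @ y)" by (rule bs_ctx)

lemma cancel1: "beq [x, flip x] []"
  using bs_cancel[of m n "fst x" "snd x"] by (cases x) (simp add: flip_def)
lemma cancel2: "beq [flip x, x] []"
  using bs_cancel[of m n "fst x" "\<not> snd x"] by (cases x) (simp add: flip_def)

lemma inv_r: "beq (w @ winv w) []"
proof (induction w)
  case Nil then show ?case by simp
next
  case (Cons x w)
  have "beq ([x] @ (w @ winv w) @ [flip x]) ([x] @ [] @ [flip x])"
    by (rule beq_app3[OF Cons.IH])
  then have "beq ((x # w) @ winv (x # w)) [x, flip x]" by simp
  then show ?case using cancel1 beq_trans by blast
qed

lemma inv_l: "beq (winv w @ w) []"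
  using inv_r[of "winv w"] by simp

lemma beq_winv: "beq u v \<Longrightarrow> beq (winv u) (winv v)"
proof -
  assume uv: "beq u v"
  have "beq (winv u @ (v @ winv v)) (winv u @ [])"
    by (rule beq_app[OF beq_refl inv_r])
  then have 1: "beq (winv u) (winv u @ v @ winv v)" by (simp add: beq_sym)
  have "beq (winv u @ v @ winv v) (winv u @ u @ winv v)"
    by (rule beq_app3[OF beq_sym[OF uv]])
  also have "beq (winv u @ u @ winv v) ([] @ winv v)"
    using beq_app[OF inv_l[of u] beq_refl[of "winv v"]] by simp
  finally show ?thesis using 1 by (auto intro: beq_trans)
qed

lemma apow_0[simp]: "apow 0 = []" by (simp add: apow_def)
lemma apow_1: "apow 1 = [(A, False)]" by (simp add: apow_def)
lemma apow_m1: "apow (-1) = [(A, True)]" by (simp add: apow_def)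

lemma winv_apow[simp]: "winv (apow k) = apow (- k)"
  by (simp add: apow_def winv_def flip_def rev_map)

lemma apow_succ: "beq (apow j @ [(A, False)]) (apow (j + 1))"
proof (cases "0 \<le> j")
  case True
  then have "nat (j + 1) = Suc (nat j)" by simp
  then show ?thesis using True by (simp add: apow_def replicate_append_same)
next
  case False
  have "\<exists>k. nat (- j) = Suc k \<and> nat (- (j + 1)) = k"
    using False by (intro exI[of _ "nat (- j) - 1"]) auto
  then obtain k where k: "nat (- j) = Suc k" and k2: "nat (- (j + 1)) = k" by blast
  have "apow j = replicate k (A, True) @ [(A, True)]" using False k
    by (simp add: apow_def replicate_append_same)
  moreover have "apow (j + 1) = replicate k (A, True)" using False k2
    by (cases "j = -1") (auto simp: apow_def)
  moreover have "beq (replicate k (A, True) @ [(A, True), (A, False)] @ []) (replicate k (A, True) @ [] @ [])"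
    by (rule beq_app3) (rule cancel1[of "(A, True)", simplified flip_def, simplified])
  ultimately show ?thesis by simp
qed

lemma apow_pred: "beq (apow j @ [(A, True)]) (apow (j - 1))"
proof -
  have "beq (apow j @ [(A, True)]) ((apow (j - 1) @ [(A, False)]) @ [(A, True)])"
    using beq_app[OF beq_sym[OF apow_succ[of "j - 1"]] beq_refl] by simp
  also have "(apow (j - 1) @ [(A, False)]) @ [(A, True)] = apow (j - 1) @ [(A, False), (A, True)] @ []"
    by simp
  also have "beq \<dots> (apow (j - 1) @ [] @ [])"
    by (rule beq_app3) (rule cancel1[of "(A, False)", simplified flip_def, simplified])
  finally show ?thesis by simp
qed

lemma apow_add: "beq (apow j @ apow k) (apow (j + k))"
proof (induction k rule: int_induct[where k = 0])
  case base then show ?case by simp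
next
  case (step1 i)
  have "beq (apow (i + 1)) (apow i @ [(A, False)])" using apow_succ beq_sym by blast
  then have "beq (apow j @ apow (i + 1)) (apow j @ apow i @ [(A, False)])"
    using beq_app[OF beq_refl] by blast
  also have "beq (apow j @ apow i @ [(A, False)]) (apow (j + i) @ [(A, False)])"
    using beq_app[OF step1.IH beq_refl[of "[(A, False)]"]] by simp
  also have "beq \<dots> (apow (j + (i + 1)))" using apow_succ[of "j + i"] by (simp add: add.assoc)
  finally show ?case .
next
  case (step2 i)
  have "beq (apow (i - 1)) (apow i @ [(A, True)])" using apow_pred beq_sym by blast
  then have "beq (apow j @ apow (i - 1)) (apow j @ apow i @ [(A, True)])"
    using beq_app[OF beq_refl] by blast
  also have "beq (apow j @ apow i @ [(A, True)]) (apow (j + i) @ [(A, True)])"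
    using beq_app[OF step2.IH beq_refl[of "[(A, True)]"]] by simp
  also have "beq \<dots> (apow (j + (i - 1)))" using apow_pred[of "j + i"] by (simp add: algebra_simps)
  finally show ?case .
qed

lemma conj_add:
  assumes "beq (winv g @ apow p @ g) (apow q)" "beq (winv g @ apow p' @ g) (apow q')"
  shows "beq (winv g @ apow (p + p') @ g) (apow (q + q'))"
proof -
  have "beq (winv g @ apow (p + p') @ g) (winv g @ (apow p @ apow p') @ g)"
    by (rule beq_app3, rule beq_sym, rule apow_add)
  also have "beq (winv g @ (apow p @ apow p') @ g) (winv g @ (apow p @ (g @ winv g) @ apow p') @ g)"
    using beq_app3[OF beq_sym[OF inv_r[of g]], of "winv g @ apow p" "apow p' @ g"] by simp
  also have "winv g @ (apow p @ (g @ winv g) @ apow p') @ g = (winv g @ apow p @ g) @ (winv g @ apow p' @ g)"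
    by simp
  also have "beq \<dots> (apow q @ apow q')" by (rule beq_app[OF assms])
  also have "beq \<dots> (apow (q + q'))" by (rule apow_add)
  finally show ?thesis .
qed

lemma conj_neg:
  assumes "beq (winv g @ apow p @ g) (apow q)"
  shows "beq (winv g @ apow (- p) @ g) (apow (- q))"
  using beq_winv[OF assms] by simp

lemma conj_mult:
  assumes "beq (winv g @ apow p @ g) (apow q)"
  shows "beq (winv g @ apow (p * k) @ g) (apow (q * k))"
proof (induction k rule: int_induct[where k = 0])
  case base
  have "beq (winv g @ [] @ g) []" using inv_l by simp
  then show ?case by simp
next
  case (step1 i)
  show ?case using conj_add[OF step1.IH assms] by (simp add: algebra_simps)
next
  case (step2 i)
  show ?case using conj_add[OF step2.IH conj_neg[OF assms]] by (simp add: algebra_simps)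
qed

lemma conj_back:
  assumes "beq (winv g @ apow p @ g) (apow q)"
  shows "beq (g @ apow q @ winv g) (apow p)"
proof -
  have "beq (g @ apow q @ winv g) (g @ (winv g @ apow p @ g) @ winv g)"
    by (rule beq_app3, rule beq_sym, rule assms)
  also have "g @ (winv g @ apow p @ g) @ winv g = (g @ winv g) @ apow p @ (g @ winv g)" by simp
  also have "beq \<dots> ([] @ apow p @ [])"
    by (rule beq_app[OF inv_r beq_app[OF beq_refl inv_r]])
  finally show ?thesis by simp
qed

lemma ev_append: "ev m n (u @ v) x = ev m n u (ev m n v x)"
  by (induction u) auto

lemma ev_apow: "ev m n (apow k) x = x + real_of_int k"
proof -
  have 1: "ev m n (replicate i (A, False)) x = x + real i" for i
    by (induction i) auto
  have 2: "ev m n (replicate i (A, True)) x = x - real i" for i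
    by (induction i) auto
  show ?thesis by (cases "0 \<le> k") (simp_all add: apow_def 1 2)
qed

lemma lt_affine: "lt m n y x = lsl m n y * x + lt m n y 0"
proof -
  obtain g b where y: "y = (g, b)" by (cases y)
  show ?thesis unfolding y by (cases g; cases b) auto
qed

lemma ev_affine: "ev m n w x = slope m n w * x + ev m n w 0"
proof (induction w arbitrary: x)
  case Nil then show ?case by (simp add: slope_def)
next
  case (Cons y w)
  have 1: "ev m n (y # w) x = lsl m n y * ev m n w x + lt m n y 0"
    using lt_affine[of y "ev m n w x"] by simp
  have 2: "ev m n (y # w) 0 = lsl m n y * ev m n w 0 + lt m n y 0"
    using lt_affine[of y "ev m n w 0"] by simp
  have 3: "ev m n w x = slope m n w * x + ev m n w 0" by (rule Cons.IH)
  show ?case unfolding 1 2 3 by (simp add: slope_def algebra_simps)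
qed

lemma lt_flip: "lt m n (flip y) (lt m n y x) = x"
proof -
  obtain g b where y: "y = (g, b)" by (cases y)
  show ?thesis unfolding y using m0 n0 by (cases g; cases b) (auto simp: flip_def)
qed

lemma lt_flip2: "lt m n y (lt m n (flip y) x) = x"
  using lt_flip[of "flip y"] by simp

lemma ev_winv: "ev m n (winv w) (ev m n w x) = x"
  by (induction w arbitrary: x) (auto simp: ev_append lt_flip)

lemma beq_ev: "beq u v \<Longrightarrow> ev m n u = ev m n v"
proof (induction rule: bs_eq.induct)
  case (bs_ctx u v x y)
  then show ?case by (auto simp: ev_append fun_eq_iff)
next
  case (bs_cancel g b)
  show ?case using lt_flip2[of "(g, b)"] by (auto simp: fun_eq_iff flip_def)
next
  case bs_rel
  show ?case using m0 n0 by (auto simp: fun_eq_iff ev_append ev_apow field_simps)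
qed auto

lemma apow_inj: "beq (apow p) (apow q) \<Longrightarrow> p = q"
  using beq_ev[of "apow p" "apow q"] by (auto simp: fun_eq_iff ev_apow)

lemma conj_ratio:
  assumes "beq (winv g @ apow k @ g) (apow r)"
  shows "real_of_int r = slope m n (winv g) * real_of_int k"
proof -
  have e: "ev m n (winv g @ apow k @ g) 0 = ev m n (apow r) 0" using beq_ev[OF assms] by simp
  have "ev m n (winv g) (ev m n g 0 + k) = r" using e by (simp add: ev_append ev_apow)
  moreover have "ev m n (winv g) (ev m n g 0) = 0" by (rule ev_winv)
  moreover have "ev m n (winv g) (ev m n g 0 + k) - ev m n (winv g) (ev m n g 0) = slope m n (winv g) * k"
    by (subst (1 2) ev_affine) (simp add: algebra_simps)
  ultimately show ?thesis by simp
qed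

lemma slope_Cons: "slope m n (y # w) = lsl m n y * slope m n w" by (simp add: slope_def)

lemma slope_pow: "\<exists>k. \<bar>slope m n w\<bar> = \<bar>real_of_int m / real_of_int n\<bar> powi k"
proof (induction w)
  case Nil then show ?case by (intro exI[of _ 0]) (simp add: slope_def)
next
  case (Cons y w)
  then obtain k where k: "\<bar>slope m n w\<bar> = \<bar>real_of_int m / real_of_int n\<bar> powi k" by blast
  have nz: "\<bar>real_of_int m / real_of_int n\<bar> \<noteq> 0" using m0 n0 by simp
  have c: "lsl m n y = 1 \<or> lsl m n y = real_of_int n / real_of_int m \<or> lsl m n y = real_of_int m / real_of_int n"
  proof -
    obtain g b where y: "y = (g, b)" by (cases y)
    show ?thesis unfolding y by (cases g; cases b) auto
  qed
  have "\<exists>j. \<bar>lsl m n y\<bar> = \<bar>real_of_int m / real_of_int n\<bar> powi j"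
  proof -
    { assume "lsl m n y = 1" then have ?thesis by (intro exI[of _ 0]) simp }
    moreover
    { assume "lsl m n y = real_of_int n / real_of_int m" then have ?thesis
        by (intro exI[of _ "-1"]) (simp add: power_int_minus abs_divide) }
    moreover
    { assume "lsl m n y = real_of_int m / real_of_int n" then have ?thesis
        by (intro exI[of _ 1]) simp }
    ultimately show ?thesis using c by blast
  qed
  then obtain j where j: "\<bar>lsl m n y\<bar> = \<bar>real_of_int m / real_of_int n\<bar> powi j" by blast
  have e: "\<bar>real_of_int m / real_of_int n\<bar> powi (j + k) = \<bar>real_of_int m / real_of_int n\<bar> powi j * \<bar>real_of_int m / real_of_int n\<bar> powi k"
    using nz by (rule power_int_add[OF disjI1])
  show ?case
    by (intro exI[of _ "j + k"]) (simp only: slope_Cons abs_mult j k e)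
qed

lemma slope_surj: "\<exists>w. \<bar>slope m n w\<bar> = \<bar>real_of_int m / real_of_int n\<bar> powi k"
proof (cases "0 \<le> k")
  case True
  have "slope m n (replicate i (T, True)) = (real_of_int m / real_of_int n) ^ i" for i
    by (induction i) (auto simp: slope_def)
  then show ?thesis using True
    by (intro exI[of _ "replicate (nat k) (T, True)"]) (simp add: power_int_def power_abs)
next
  case False
  have "slope m n (replicate i (T, False)) = (real_of_int n / real_of_int m) ^ i" for i
    by (induction i) (auto simp: slope_def)
  then show ?thesis using False
    by (intro exI[of _ "replicate (nat (- k)) (T, False)"])
       (simp add: power_int_def power_abs abs_divide power_divide)
qed

lemma letter_comm1: "\<exists>p q. p \<noteq> 0 \<and> beq ([flip (A, False)] @ apow p @ [(A, False)]) (apow q)"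
proof -
  have "beq ([(A, True), (A, False)] @ [(A, False)]) ([] @ [(A, False)])"
    by (rule beq_app[OF cancel1[of "(A, True)", simplified flip_def, simplified] beq_refl])
  then show ?thesis by (intro exI[of _ 1]) (simp add: apow_1 flip_def)
qed

lemma letter_comm2: "\<exists>p q. p \<noteq> 0 \<and> beq ([flip (A, True)] @ apow p @ [(A, True)]) (apow q)"
proof -
  have "beq ([(A, False), (A, True)] @ [(A, True)]) ([] @ [(A, True)])"
    by (rule beq_app[OF cancel1[of "(A, False)", simplified flip_def, simplified] beq_refl])
  then show ?thesis by (intro exI[of _ 1] exI[of _ "-1"]) (simp add: apow_1 apow_m1 flip_def)
qed

lemma letter_comm3: "\<exists>p q. p \<noteq> 0 \<and> beq ([flip (T, False)] @ apow p @ [(T, False)]) (apow q)"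
proof -
  have r: "beq ([(T, False)] @ apow m @ [(T, True)]) (apow n)" by (rule bs_rel)
  have "beq ([(T, True)] @ apow n @ [(T, False)]) ([(T, True)] @ ([(T, False)] @ apow m @ [(T, True)]) @ [(T, False)])"
    by (rule beq_app3, rule beq_sym, rule r)
  also have "[(T, True)] @ ([(T, False)] @ apow m @ [(T, True)]) @ [(T, False)] = [(T, True), (T, False)] @ apow m @ [(T, True), (T, False)]"
    by simp
  also have "beq \<dots> ([] @ apow m @ [])"
    by (rule beq_app[OF cancel1[of "(T, True)", simplified flip_def, simplified] beq_app[OF beq_refl cancel1[of "(T, True)", simplified flip_def, simplified]]])
  finally show ?thesis using n0
    by (intro exI[of _ n] exI[of _ m]) (simp add: flip_def)
qed

lemma letter_comm4: "\<exists>p q. p \<noteq> 0 \<and> beq ([flip (T, True)] @ apow p @ [(T, True)]) (apow q)"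
  using m0 bs_rel[of m n] by (intro exI[of _ m] exI[of _ n]) (simp add: flip_def)

lemma letter_comm: "\<exists>p q. p \<noteq> 0 \<and> beq ([flip x] @ apow p @ [x]) (apow q)"
proof -
  obtain g b where x: "x = (g, b)" by (cases x)
  show ?thesis unfolding x
    using letter_comm1 letter_comm2 letter_comm3 letter_comm4 by (cases g; cases b) auto
qed

lemma comm: "\<exists>p q. p \<noteq> 0 \<and> beq (winv g @ apow p @ g) (apow q)"
proof (induction g)
  case Nil then show ?case by (intro exI[of _ 1]) simp
next
  case (Cons x h)
  obtain ph qh where h: "ph \<noteq> 0" "beq (winv h @ apow ph @ h) (apow qh)" using Cons by blast
  obtain px qx where x: "px \<noteq> 0" "beq ([flip x] @ apow px @ [x]) (apow qx)" using letter_comm by blast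
  have "beq (winv [x] @ apow px @ [x]) (apow qx)" using x(2) by simp
  then have "beq (winv [x] @ apow (px * ph) @ [x]) (apow (qx * ph))"
    by (rule conj_mult)
  then have "beq (winv h @ ([flip x] @ apow (px * ph) @ [x]) @ h) (winv h @ apow (qx * ph) @ h)"
    by (intro beq_app3) simp
  also have "beq (winv h @ apow (qx * ph) @ h) (apow (qh * qx))"
    using conj_mult[OF h(2), of qx] by (simp add: mult.commute)
  finally show ?case using h(1) x(1) by (intro exI[of _ "px * ph"] exI[of _ "qh * qx"]) simp
qed

definition Sset :: "word \<Rightarrow> int set" where
  "Sset w = {k. \<exists>r. beq (winv w @ apow k @ w) (apow r)}"

lemma Sset_pZ: "\<exists>p>0. Sset w = range (\<lambda>j. p * j)"
proof -
  obtain k q where kq: "k \<noteq> 0" "beq (winv w @ apow k @ w) (apow q)" using comm by blast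
  show ?thesis
  proof (rule int_subgroup)
    show "a + b \<in> Sset w" if "a \<in> Sset w" "b \<in> Sset w" for a b
      using that conj_add unfolding Sset_def by blast
    show "- a \<in> Sset w" if "a \<in> Sset w" for a
      using that conj_neg unfolding Sset_def by blast
    show "0 \<in> Sset w" unfolding Sset_def using inv_l[of w] by (intro CollectI exI[of _ 0]) simp
    show "k \<in> Sset w" using kq unfolding Sset_def by blast
    show "k \<noteq> 0" by fact
  qed
qed

lemma coset_mem: "u \<in> bs_coset m n u"
  unfolding bs_coset_def by (intro CollectI exI[of _ 0]) simp

lemma coset_sub: "beq u (v @ apow k) \<Longrightarrow> bs_coset m n u \<subseteq> bs_coset m n v"
proof
  fix w assume uv: "beq u (v @ apow k)" and "w \<in> bs_coset m n u"
  then obtain j where "beq w (u @ apow j)" unfolding bs_coset_def by blast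
  also have "beq (u @ apow j) ((v @ apow k) @ apow j)" by (rule beq_app[OF uv beq_refl])
  also have "beq ((v @ apow k) @ apow j) (v @ apow (k + j))"
    using beq_app[OF beq_refl[of v] apow_add[of k j]] by simp
  finally show "w \<in> bs_coset m n v" unfolding bs_coset_def by blast
qed

lemma coset_eq_iff: "bs_coset m n u = bs_coset m n v \<longleftrightarrow> (\<exists>k. beq (winv v @ u) (apow k))"
proof
  assume "bs_coset m n u = bs_coset m n v"
  then have "u \<in> bs_coset m n v" using coset_mem by blast
  then obtain k where k: "beq u (v @ apow k)" unfolding bs_coset_def by blast
  have "beq (winv v @ u) (winv v @ v @ apow k)" by (rule beq_app[OF beq_refl k])
  also have "beq (winv v @ v @ apow k) ([] @ apow k)"
    using beq_app[OF inv_l[of v] beq_refl[of "apow k"]] by simp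
  finally show "\<exists>k. beq (winv v @ u) (apow k)" by auto
next
  assume "\<exists>k. beq (winv v @ u) (apow k)"
  then obtain k where k: "beq (winv v @ u) (apow k)" by blast
  have "beq u ((v @ winv v) @ u)" using beq_app[OF beq_sym[OF inv_r[of v]] beq_refl[of u]] by simp
  also have "beq ((v @ winv v) @ u) (v @ apow k)" using beq_app[OF beq_refl[of v] k] by simp
  finally have 1: "beq u (v @ apow k)" .
  have "beq (u @ apow (- k)) (v @ apow k @ apow (- k))" using beq_app[OF 1 beq_refl] by simp
  also have "beq (v @ apow k @ apow (- k)) (v @ apow 0)" using beq_app[OF beq_refl apow_add[of k "- k"]] by simp
  finally have 2: "beq v (u @ apow (- k))" by (simp add: beq_sym)
  show "bs_coset m n u = bs_coset m n v" using coset_sub[OF 1] coset_sub[OF 2] by blast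
qed

lemma coset_beq: "beq u v \<Longrightarrow> bs_coset m n u = bs_coset m n v"
proof -
  assume uv: "beq u v"
  have 1: "beq u (v @ apow 0)" using uv by simp
  have 2: "beq v (u @ apow 0)" using beq_sym[OF uv] by simp
  show ?thesis using coset_sub[OF 1] coset_sub[OF 2] by blast
qed

lemma coset_pow_eq:
  "bs_coset m n (w1 @ apow k @ w2) = bs_coset m n (w1 @ apow k' @ w2) \<longleftrightarrow> k - k' \<in> Sset w2"
proof -
  have "beq (winv (w1 @ apow k' @ w2) @ w1 @ apow k @ w2) (winv w2 @ (apow (- k') @ (winv w1 @ w1) @ apow k) @ w2)"
    by simp
  also have "beq (winv w2 @ (apow (- k') @ (winv w1 @ w1) @ apow k) @ w2) (winv w2 @ (apow (- k') @ [] @ apow k) @ w2)"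
    by (intro beq_app3 beq_app[OF beq_refl] beq_app[OF inv_l beq_refl])
  also have "beq (winv w2 @ (apow (- k') @ [] @ apow k) @ w2) (winv w2 @ apow (k - k') @ w2)"
    using beq_app3[OF apow_add[of "- k'" k]] by simp
  finally have e: "beq (winv (w1 @ apow k' @ w2) @ w1 @ apow k @ w2) (winv w2 @ apow (k - k') @ w2)" .
  show ?thesis unfolding coset_eq_iff Sset_def mem_Collect_eq
  proof
    assume "\<exists>r. beq (winv (w1 @ apow k' @ w2) @ w1 @ apow k @ w2) (apow r)"
    then obtain r where "beq (winv (w1 @ apow k' @ w2) @ w1 @ apow k @ w2) (apow r)" by blast
    from beq_trans[OF beq_sym[OF e] this] show "\<exists>r. beq (winv w2 @ apow (k - k') @ w2) (apow r)" by blast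
  next
    assume "\<exists>r. beq (winv w2 @ apow (k - k') @ w2) (apow r)"
    then obtain r where "beq (winv w2 @ apow (k - k') @ w2) (apow r)" by blast
    from beq_trans[OF e this] show "\<exists>r. beq (winv (w1 @ apow k' @ w2) @ w1 @ apow k @ w2) (apow r)" by blast
  qed
qed

lemma card_orbit:
  assumes "p > 0" "Sset w2 = range (\<lambda>j. p * j)"
  shows "card (range (\<lambda>k. bs_coset m n (w1 @ apow k @ w2))) = nat p"
proof -
  let ?f = "\<lambda>k. bs_coset m n (w1 @ apow k @ w2)"
  have "range ?f = ?f ` {0..<p}"
  proof
    show "range ?f \<subseteq> ?f ` {0..<p}"
    proof
      fix C assume "C \<in> range ?f"
      then obtain k where C: "C = ?f k" by blast
      have "k - k mod p = p * (k div p)" by (simp add: minus_mod_eq_mult_div)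
      then have "?f k = ?f (k mod p)" using coset_pow_eq assms(2) by auto
      moreover have "k mod p \<in> {0..<p}" using assms(1) by simp
      ultimately show "C \<in> ?f ` {0..<p}" using C by blast
    qed
  qed auto
  moreover have "inj_on ?f {0..<p}"
  proof
    fix k k' assume k: "k \<in> {0..<p}" "k' \<in> {0..<p}" and "?f k = ?f k'"
    then have "k - k' \<in> range (\<lambda>j. p * j)" using coset_pow_eq assms(2) by auto
    then obtain j where j: "k - k' = p * j" by blast
    have "\<bar>k - k'\<bar> < p" using k by auto
    have "j = 0"
    proof (rule ccontr)
      assume "j \<noteq> 0"
      then have "1 \<le> \<bar>j\<bar>" by simp
      then have "p * 1 \<le> p * \<bar>j\<bar>" using assms(1) by (intro mult_left_mono) auto
      moreover have "\<bar>k - k'\<bar> = p * \<bar>j\<bar>" using j assms(1) by (simp add: abs_mult)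
      ultimately show False using \<open>\<bar>k - k'\<bar> < p\<close> by simp
    qed
    then show "k = k'" using j by simp
  qed
  ultimately show ?thesis by (simp add: card_image)
qed

lemma slope_nz: "slope m n w \<noteq> 0"
proof -
  obtain k where k: "\<bar>slope m n w\<bar> = \<bar>real_of_int m / real_of_int n\<bar> powi k" using slope_pow by blast
  have "\<bar>real_of_int m / real_of_int n\<bar> powi k \<noteq> 0" using m0 n0 by simp
  then show ?thesis using k by auto
qed

lemma word_ratio:
  "real (card (range (\<lambda>k. bs_coset m n (g @ apow k @ winv g)))) /
   real (card (range (\<lambda>k. bs_coset m n ([] @ apow k @ g)))) = \<bar>slope m n (winv g)\<bar>"
proof -
  obtain p where p: "p > 0" "Sset g = range (\<lambda>j. p * j)" using Sset_pZ by blast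
  have "p \<in> Sset g" using p by (auto intro: range_eqI[of _ _ 1])
  then obtain q where q: "beq (winv g @ apow p @ g) (apow q)" unfolding Sset_def by blast
  define s where "s = slope m n (winv g)"
  have qs: "real_of_int q = s * real_of_int p" using conj_ratio[OF q] s_def by simp
  have s0: "s \<noteq> 0" unfolding s_def by (rule slope_nz)
  have q0: "q \<noteq> 0" using qs s0 p(1) by auto
  have "Sset (winv g) = range (\<lambda>j. \<bar>q\<bar> * j)"
  proof
    show "Sset (winv g) \<subseteq> range (\<lambda>j. \<bar>q\<bar> * j)"
    proof
      fix k assume "k \<in> Sset (winv g)"
      then obtain r where r: "beq (g @ apow k @ winv g) (apow r)" unfolding Sset_def by auto
      have r2: "beq (winv g @ apow r @ g) (apow k)" using conj_back[of "winv g" k r] r by simp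
      then have "r \<in> Sset g" unfolding Sset_def by blast
      then obtain j where j: "r = p * j" using p by blast
      have "real_of_int k = s * real_of_int r" using conj_ratio[OF r2] s_def by simp
      then have "real_of_int k = real_of_int (q * j)" using j qs by simp
      then have "k = q * j" by (simp only: of_int_eq_iff)
      then have "k = \<bar>q\<bar> * (sgn q * j)" by (metis abs_mult_sgn mult.assoc)
      then show "k \<in> range (\<lambda>j. \<bar>q\<bar> * j)" by blast
    qed
  next
    show "range (\<lambda>j. \<bar>q\<bar> * j) \<subseteq> Sset (winv g)"
    proof
      fix k assume "k \<in> range (\<lambda>j. \<bar>q\<bar> * j)"
      then obtain j where "k = \<bar>q\<bar> * j" by blast
      have "q * sgn q = \<bar>q\<bar>" by (simp add: abs_if sgn_if)
      then have kj: "k = q * (sgn q * j)" using \<open>k = \<bar>q\<bar> * j\<close> by (metis mult.assoc)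
      have "beq (winv g @ apow (p * (sgn q * j)) @ g) (apow (q * (sgn q * j)))" by (rule conj_mult[OF q])
      then have "beq (g @ apow k @ winv g) (apow (p * (sgn q * j)))" using conj_back kj by blast
      then show "k \<in> Sset (winv g)" unfolding Sset_def by auto
    qed
  qed
  then have c1: "card (range (\<lambda>k. bs_coset m n (g @ apow k @ winv g))) = nat \<bar>q\<bar>"
    using card_orbit[of "\<bar>q\<bar>" "winv g" g] q0 by simp
  have c2: "card (range (\<lambda>k. bs_coset m n ([] @ apow k @ g))) = nat p"
    using card_orbit[OF p, of "[]"] .
  show ?thesis unfolding c1 c2 using p(1) qs s_def
    by (simp add: abs_mult)
qed

abbreviation S where "S \<equiv> bs_cosets m n"
abbreviation x0 where "x0 \<equiv> bs_coset m n []"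
abbreviation iota where "iota \<equiv> bs_iota m n"

lemma coset_in[simp]: "bs_coset m n w \<in> S" by (simp add: bs_cosets_def)

lemma S_cases: "C \<in> S \<Longrightarrow> \<exists>v. C = bs_coset m n v" by (auto simp: bs_cosets_def)

lemma iota_coset[simp]: "iota g (bs_coset m n v) = bs_coset m n (g @ v)"
proof -
  have "{u. \<exists>v'\<in>bs_coset m n v. beq u (g @ v')} = bs_coset m n (g @ v)"
  proof
    show "{u. \<exists>v'\<in>bs_coset m n v. beq u (g @ v')} \<subseteq> bs_coset m n (g @ v)"
    proof
      fix u assume "u \<in> {u. \<exists>v'\<in>bs_coset m n v. beq u (g @ v')}"
      then obtain v' k where uv: "beq u (g @ v')" "beq v' (v @ apow k)" unfolding bs_coset_def by blast
      have "beq (g @ v') (g @ v @ apow k)" by (rule beq_app[OF beq_refl uv(2)])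
      then have "beq u ((g @ v) @ apow k)" using beq_trans[OF uv(1)] by simp
      then show "u \<in> bs_coset m n (g @ v)" unfolding bs_coset_def by blast
    qed
    show "bs_coset m n (g @ v) \<subseteq> {u. \<exists>v'\<in>bs_coset m n v. beq u (g @ v')}"
    proof
      fix u assume "u \<in> bs_coset m n (g @ v)"
      then obtain k where "beq u ((g @ v) @ apow k)" unfolding bs_coset_def by blast
      moreover have "v @ apow k \<in> bs_coset m n v" unfolding bs_coset_def using beq_refl by blast
      ultimately show "u \<in> {u. \<exists>v'\<in>bs_coset m n v. beq u (g @ v')}" by force
    qed
  qed
  then show ?thesis by (simp add: bs_iota_def)
qed

lemma iota_S: "C \<in> S \<Longrightarrow> iota g C \<in> S"
  using S_cases by fastforce

lemma iota_comp: "C \<in> S \<Longrightarrow> iota g (iota h C) = iota (g @ h) C"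
  using S_cases by fastforce

lemma iota_inv: "C \<in> S \<Longrightarrow> iota (winv g) (iota g C) = C"
proof -
  assume "C \<in> S"
  then obtain v where v: "C = bs_coset m n v" using S_cases by blast
  have "beq (winv g @ g @ v) ([] @ v)" using beq_app[OF inv_l[of g] beq_refl[of v]] by simp
  then show ?thesis unfolding v by (simp add: coset_beq)
qed

lemma iota_Bij: "iota g \<in> Bij S"
proof -
  have "bij_betw (iota g) S S"
    by (rule bij_betw_byWitness[where f' = "iota (winv g)"])
       (auto simp: iota_inv iota_S dest: iota_inv[of _ "winv g", simplified])
  then show ?thesis by (simp add: Bij_def bs_iota_def)
qed

lemma iota_G: "iota g \<in> G_carrier m n"
  unfolding G_carrier_def using iota_Bij by blast

lemma approx: "\<sigma> \<in> G_carrier m n \<Longrightarrow> F \<subseteq> S \<Longrightarrow> finite F \<Longrightarrow> \<exists>h. \<forall>x\<in>F. iota h x = \<sigma> x"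
  unfolding G_carrier_def by blast

lemma G_Bij: "\<sigma> \<in> G_carrier m n \<Longrightarrow> \<sigma> \<in> Bij S"
  unfolding G_carrier_def by blast

lemma G_S: "\<sigma> \<in> G_carrier m n \<Longrightarrow> x \<in> S \<Longrightarrow> \<sigma> x \<in> S"
  using G_Bij Bij_imp_funcset by blast

lemma G_subgroup: "subgroup (G_carrier m n) (BijGroup S)"
proof
  show "G_carrier m n \<subseteq> carrier (BijGroup S)" using G_Bij by (auto simp: BijGroup_def)
next
  fix \<sigma> \<tau> assume st: "\<sigma> \<in> G_carrier m n" "\<tau> \<in> G_carrier m n"
  have prod: "\<sigma> \<otimes>\<^bsub>BijGroup S\<^esub> \<tau> = compose S \<sigma> \<tau>" using st G_Bij by (simp add: BijGroup_def)
  show "\<sigma> \<otimes>\<^bsub>BijGroup S\<^esub> \<tau> \<in> G_carrier m n"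
    unfolding prod G_carrier_def
  proof (intro CollectI conjI allI impI)
    show "compose S \<sigma> \<tau> \<in> Bij S" using st G_Bij compose_Bij by blast
    fix F assume F: "F \<subseteq> S \<and> finite F"
    obtain h where h: "\<forall>x\<in>F. iota h x = \<tau> x" using approx[OF st(2)] F by blast
    have "\<tau> ` F \<subseteq> S" using F G_S st(2) by blast
    then obtain g where g: "\<forall>x\<in>\<tau> ` F. iota g x = \<sigma> x" using approx[OF st(1)] F by blast
    have "\<forall>x\<in>F. iota (g @ h) x = compose S \<sigma> \<tau> x"
    proof
      fix x assume x: "x \<in> F"
      then have xS: "x \<in> S" using F by blast
      have "iota (g @ h) x = iota g (iota h x)" using iota_comp[OF xS] by simp
      also have "\<dots> = \<sigma> (\<tau> x)" using x g h by simp
      finally show "iota (g @ h) x = compose S \<sigma> \<tau> x" using xS by (simp add: compose_def)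
    qed
    then show "\<exists>g. \<forall>x\<in>F. iota g x = compose S \<sigma> \<tau> x" by blast
  qed
next
  have "\<one>\<^bsub>BijGroup S\<^esub> x = iota [] x" for x
  proof (cases "x \<in> S")
    case True
    then obtain v where "x = bs_coset m n v" using S_cases by blast
    then show ?thesis by (simp add: BijGroup_def)
  next
    case False
    then show ?thesis by (simp add: BijGroup_def bs_iota_def)
  qed
  then have "\<one>\<^bsub>BijGroup S\<^esub> = iota []" by (simp add: fun_eq_iff)
  then show "\<one>\<^bsub>BijGroup S\<^esub> \<in> G_carrier m n" using iota_G by simp
next
  fix \<sigma> assume s: "\<sigma> \<in> G_carrier m n"
  have inv: "inv\<^bsub>BijGroup S\<^esub> \<sigma> = (\<lambda>x\<in>S. inv_into S \<sigma> x)" using inv_BijGroup G_Bij s by blast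
  have bij: "bij_betw \<sigma> S S" using G_Bij[OF s] by (simp add: Bij_def)
  show "inv\<^bsub>BijGroup S\<^esub> \<sigma> \<in> G_carrier m n"
    unfolding inv G_carrier_def
  proof (intro CollectI conjI allI impI)
    show "(\<lambda>x\<in>S. inv_into S \<sigma> x) \<in> Bij S" using restrict_inv_into_Bij G_Bij s by blast
    fix F assume F: "F \<subseteq> S \<and> finite F"
    have "inv_into S \<sigma> ` F \<subseteq> S" using F bij by (auto simp: bij_betw_def inv_into_into)
    then obtain h where h: "\<forall>x\<in>inv_into S \<sigma> ` F. iota h x = \<sigma> x" using approx[OF s] F by blast
    have "\<forall>x\<in>F. iota (winv h) x = (\<lambda>x\<in>S. inv_into S \<sigma> x) x"
    proof
      fix x assume x: "x \<in> F"
      let ?y = "inv_into S \<sigma> x"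
      have y: "?y \<in> S" "\<sigma> ?y = x" using x F bij by (auto simp: bij_betw_def inv_into_into f_inv_into_f)
      have "iota h ?y = x" using h x y by auto
      then have "iota (winv h) x = ?y" using iota_inv[OF y(1), of h] by simp
      then show "iota (winv h) x = (\<lambda>x\<in>S. inv_into S \<sigma> x) x" using x F by auto
    qed
    then show "\<exists>g. \<forall>x\<in>F. iota g x = (\<lambda>x\<in>S. inv_into S \<sigma> x) x" by blast
  qed
qed

lemma G_group: "group (Gmn m n)"
  unfolding Gmn_def by (rule subgroup.subgroup_is_group[OF G_subgroup group_BijGroup])

lemma carrier_Gmn[simp]: "carrier (Gmn m n) = G_carrier m n" by (simp add: Gmn_def)

lemma mult_apply: "\<sigma> \<in> G_carrier m n \<Longrightarrow> \<tau> \<in> G_carrier m n \<Longrightarrow> x \<in> S \<Longrightarrow> (\<sigma> \<otimes>\<^bsub>Gmn m n\<^esub> \<tau>) x = \<sigma> (\<tau> x)"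
  using G_Bij by (simp add: Gmn_def BijGroup_def compose_def)

lemma one_apply: "x \<in> S \<Longrightarrow> \<one>\<^bsub>Gmn m n\<^esub> x = x"
  by (simp add: Gmn_def BijGroup_def)

lemma inv_apply1: "\<sigma> \<in> G_carrier m n \<Longrightarrow> x \<in> S \<Longrightarrow> (inv\<^bsub>Gmn m n\<^esub> \<sigma>) (\<sigma> x) = x"
proof -
  assume a: "\<sigma> \<in> G_carrier m n" "x \<in> S"
  interpret G: group "Gmn m n" by (rule G_group)
  have ic: "inv\<^bsub>Gmn m n\<^esub> \<sigma> \<in> G_carrier m n" using G.inv_closed a(1) by simp
  have "(inv\<^bsub>Gmn m n\<^esub> \<sigma> \<otimes>\<^bsub>Gmn m n\<^esub> \<sigma>) x = x" using a G.l_inv one_apply by simp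
  then show ?thesis using mult_apply[OF ic a(1) a(2)] by simp
qed

lemma inv_apply2: "\<sigma> \<in> G_carrier m n \<Longrightarrow> x \<in> S \<Longrightarrow> \<sigma> ((inv\<^bsub>Gmn m n\<^esub> \<sigma>) x) = x"
proof -
  assume a: "\<sigma> \<in> G_carrier m n" "x \<in> S"
  interpret G: group "Gmn m n" by (rule G_group)
  have ic: "inv\<^bsub>Gmn m n\<^esub> \<sigma> \<in> G_carrier m n" using G.inv_closed a(1) by simp
  have "(\<sigma> \<otimes>\<^bsub>Gmn m n\<^esub> inv\<^bsub>Gmn m n\<^esub> \<sigma>) x = x" using a G.r_inv one_apply by simp
  then show ?thesis using mult_apply[OF a(1) ic a(2)] by simp
qed

lemma stab_subgroup: "Z \<subseteq> S \<Longrightarrow> subgroup (stab m n Z) (Gmn m n)"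
proof -
  assume Z: "Z \<subseteq> S"
  interpret G: group "Gmn m n" by (rule G_group)
  show ?thesis
  proof (rule G.subgroupI)
    show "stab m n Z \<subseteq> carrier (Gmn m n)" by (auto simp: stab_def)
    have "\<one>\<^bsub>Gmn m n\<^esub> \<in> stab m n Z" using Z one_apply G.one_closed by (auto simp: stab_def)
    then show "stab m n Z \<noteq> {}" by blast
    fix a assume a: "a \<in> stab m n Z"
    have "(inv\<^bsub>Gmn m n\<^esub> a) z = z" if "z \<in> Z" for z
      using inv_apply1[of a z] a that Z by (auto simp: stab_def)
    then show "inv\<^bsub>Gmn m n\<^esub> a \<in> stab m n Z" using a G.inv_closed by (auto simp: stab_def)
    fix b assume b: "b \<in> stab m n Z"
    show "a \<otimes>\<^bsub>Gmn m n\<^esub> b \<in> stab m n Z"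
      using a b Z G.m_closed mult_apply by (auto simp: stab_def subset_iff)
  qed
qed

lemma conj_stab:
  assumes s: "\<sigma> \<in> G_carrier m n" and z: "z \<in> S"
  shows "conj_set (Gmn m n) \<sigma> (stab m n {z}) = stab m n {\<sigma> z}"
proof -
  interpret G: group "Gmn m n" by (rule G_group)
  have sz: "\<sigma> z \<in> S" using G_S s z by blast
  have isc: "inv\<^bsub>Gmn m n\<^esub> \<sigma> \<in> G_carrier m n" using G.inv_closed s by simp
  show ?thesis
  proof
    show "conj_set (Gmn m n) \<sigma> (stab m n {z}) \<subseteq> stab m n {\<sigma> z}"
    proof
      fix x assume "x \<in> conj_set (Gmn m n) \<sigma> (stab m n {z})"
      then obtain u where u: "u \<in> G_carrier m n" "u z = z"
        and x: "x = \<sigma> \<otimes>\<^bsub>Gmn m n\<^esub> u \<otimes>\<^bsub>Gmn m n\<^esub> inv\<^bsub>Gmn m n\<^esub> \<sigma>"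
        by (auto simp: conj_set_def stab_def)
      have xc: "x \<in> G_carrier m n" using x u s isc G.m_closed by simp
      have "x (\<sigma> z) = \<sigma> (u ((inv\<^bsub>Gmn m n\<^esub> \<sigma>) (\<sigma> z)))"
        unfolding x using s u isc sz G.m_closed z G_S by (simp add: mult_apply)
      also have "\<dots> = \<sigma> z" using inv_apply1[OF s z] u by simp
      finally show "x \<in> stab m n {\<sigma> z}" using xc by (simp add: stab_def)
    qed
  next
    show "stab m n {\<sigma> z} \<subseteq> conj_set (Gmn m n) \<sigma> (stab m n {z})"
    proof
      fix \<tau> assume t: "\<tau> \<in> stab m n {\<sigma> z}"
      then have tc: "\<tau> \<in> G_carrier m n" "\<tau> (\<sigma> z) = \<sigma> z" by (auto simp: stab_def)
      define u where "u = inv\<^bsub>Gmn m n\<^esub> \<sigma> \<otimes>\<^bsub>Gmn m n\<^esub> \<tau> \<otimes>\<^bsub>Gmn m n\<^esub> \<sigma>"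
      have uc: "u \<in> G_carrier m n" unfolding u_def using isc tc s G.m_closed by simp
      have itc: "inv\<^bsub>Gmn m n\<^esub> \<sigma> \<otimes>\<^bsub>Gmn m n\<^esub> \<tau> \<in> G_carrier m n"
        using isc tc G.m_closed by simp
      have "u z = (inv\<^bsub>Gmn m n\<^esub> \<sigma> \<otimes>\<^bsub>Gmn m n\<^esub> \<tau>) (\<sigma> z)"
        unfolding u_def by (rule mult_apply[OF itc s z])
      also have "\<dots> = (inv\<^bsub>Gmn m n\<^esub> \<sigma>) (\<tau> (\<sigma> z))" by (rule mult_apply[OF isc tc(1) sz])
      finally have "u z = (inv\<^bsub>Gmn m n\<^esub> \<sigma>) (\<tau> (\<sigma> z))" .
      also have "\<dots> = z" using tc inv_apply1[OF s z] by simp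
      finally have us: "u \<in> stab m n {z}" using uc by (simp add: stab_def)
      have c: "\<sigma> \<in> carrier (Gmn m n)" "\<tau> \<in> carrier (Gmn m n)" "inv\<^bsub>Gmn m n\<^esub> \<sigma> \<in> carrier (Gmn m n)"
        using isc tc s by auto
      have lem: "\<sigma> \<otimes>\<^bsub>Gmn m n\<^esub> (inv\<^bsub>Gmn m n\<^esub> \<sigma> \<otimes>\<^bsub>Gmn m n\<^esub> x) = x" if "x \<in> carrier (Gmn m n)" for x
        using c that by (simp add: G.m_assoc[symmetric] del: carrier_Gmn)
      have "\<sigma> \<otimes>\<^bsub>Gmn m n\<^esub> u \<otimes>\<^bsub>Gmn m n\<^esub> inv\<^bsub>Gmn m n\<^esub> \<sigma> = \<tau>"
        unfolding u_def using c by (simp add: G.m_assoc lem del: carrier_Gmn)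

      then show "\<tau> \<in> conj_set (Gmn m n) \<sigma> (stab m n {z})"
        using us unfolding conj_set_def by force
    qed
  qed
qed

lemma index_orbit:
  assumes z1: "z1 \<in> S" and z2: "z2 \<in> S"
  shows "sg_index (Gmn m n) (stab m n {z1}) (stab m n {z1} \<inter> stab m n {z2})
         = card ((\<lambda>\<tau>. \<tau> z2) ` stab m n {z1})"
proof -
  interpret G: group "Gmn m n" by (rule G_group)
  let ?H = "stab m n {z1}"
  let ?K = "stab m n {z1} \<inter> stab m n {z2}"
  have K: "?K = stab m n {z1, z2}" by (auto simp: stab_def)
  have Ksub: "subgroup ?K (Gmn m n)" unfolding K by (rule stab_subgroup) (use z1 z2 in auto)
  have Hsub: "subgroup ?H (Gmn m n)" by (rule stab_subgroup) (use z1 in auto)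
  have key: "?K #>\<^bsub>Gmn m n\<^esub> h = ?K #>\<^bsub>Gmn m n\<^esub> h' \<longleftrightarrow>
             (inv\<^bsub>Gmn m n\<^esub> h) z2 = (inv\<^bsub>Gmn m n\<^esub> h') z2"
    if h: "h \<in> ?H" "h' \<in> ?H" for h h'
  proof -
    have hc: "h \<in> G_carrier m n" "h' \<in> G_carrier m n" "h z1 = z1" "h' z1 = z1"
      using h by (auto simp: stab_def)
    have ic: "inv\<^bsub>Gmn m n\<^esub> h \<in> G_carrier m n" "inv\<^bsub>Gmn m n\<^esub> h' \<in> G_carrier m n"
      using hc G.inv_closed by auto
    show ?thesis
    proof
      assume "?K #>\<^bsub>Gmn m n\<^esub> h = ?K #>\<^bsub>Gmn m n\<^esub> h'"
      then have "h \<in> ?K #>\<^bsub>Gmn m n\<^esub> h'" using G.rcos_self[OF _ Ksub] hc by auto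
      then obtain k where k: "k \<in> ?K" "h = k \<otimes>\<^bsub>Gmn m n\<^esub> h'" unfolding r_coset_def by auto
      have kc: "k \<in> G_carrier m n" "k z2 = z2" using k(1) by (auto simp: stab_def)
      have "inv\<^bsub>Gmn m n\<^esub> h = inv\<^bsub>Gmn m n\<^esub> h' \<otimes>\<^bsub>Gmn m n\<^esub> inv\<^bsub>Gmn m n\<^esub> k"
        using k(2) kc hc by (simp add: G.inv_mult_group)
      then have "(inv\<^bsub>Gmn m n\<^esub> h) z2 = (inv\<^bsub>Gmn m n\<^esub> h') ((inv\<^bsub>Gmn m n\<^esub> k) z2)"
        using ic kc G.inv_closed z2 by (simp add: mult_apply)
      also have "(inv\<^bsub>Gmn m n\<^esub> k) z2 = z2" using inv_apply1[OF kc(1) z2] kc by simp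
      finally show "(inv\<^bsub>Gmn m n\<^esub> h) z2 = (inv\<^bsub>Gmn m n\<^esub> h') z2" .
    next
      assume e: "(inv\<^bsub>Gmn m n\<^esub> h) z2 = (inv\<^bsub>Gmn m n\<^esub> h') z2"
      define k where "k = h \<otimes>\<^bsub>Gmn m n\<^esub> inv\<^bsub>Gmn m n\<^esub> h'"
      have kc: "k \<in> G_carrier m n" unfolding k_def using hc ic G.m_closed by simp
      have "k z1 = h ((inv\<^bsub>Gmn m n\<^esub> h') z1)" unfolding k_def using hc ic z1 by (simp add: mult_apply)
      also have "(inv\<^bsub>Gmn m n\<^esub> h') z1 = z1" using inv_apply1[OF hc(2) z1] hc by simp
      finally have k1: "k z1 = z1" using hc by simp
      have "k z2 = h ((inv\<^bsub>Gmn m n\<^esub> h) z2)" unfolding k_def using hc ic z2 e by (simp add: mult_apply)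
      also have "\<dots> = z2" using inv_apply2[OF hc(1) z2] .
      finally have k2: "k z2 = z2" .
      have kK: "k \<in> ?K" using kc k1 k2 by (simp add: stab_def)
      have "h = k \<otimes>\<^bsub>Gmn m n\<^esub> h'" unfolding k_def using hc ic by (simp add: G.m_assoc)
      then have "h \<in> ?K #>\<^bsub>Gmn m n\<^esub> h'" using kK unfolding r_coset_def by auto
      then show "?K #>\<^bsub>Gmn m n\<^esub> h = ?K #>\<^bsub>Gmn m n\<^esub> h'"
        using G.repr_independence[OF _ _ Ksub] hc by auto
    qed
  qed
  have "sg_index (Gmn m n) ?H ?K = card ((\<lambda>h. (inv\<^bsub>Gmn m n\<^esub> h) z2) ` ?H)"
    unfolding sg_index_def by (rule card_image_rel) (rule key)
  also have "(\<lambda>h. (inv\<^bsub>Gmn m n\<^esub> h) z2) ` ?H = (\<lambda>h. h z2) ` ?H"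
  proof -
    have invH: "(\<lambda>h. inv\<^bsub>Gmn m n\<^esub> h) ` ?H = ?H"
    proof
      show "(\<lambda>h. inv\<^bsub>Gmn m n\<^esub> h) ` ?H \<subseteq> ?H" using subgroup.m_inv_closed[OF Hsub] by auto
      show "?H \<subseteq> (\<lambda>h. inv\<^bsub>Gmn m n\<^esub> h) ` ?H"
      proof
        fix h assume h: "h \<in> ?H"
        then have "h = inv\<^bsub>Gmn m n\<^esub> (inv\<^bsub>Gmn m n\<^esub> h)" using subgroup.mem_carrier[OF Hsub] by simp
        then show "h \<in> (\<lambda>h. inv\<^bsub>Gmn m n\<^esub> h) ` ?H" using h subgroup.m_inv_closed[OF Hsub] by blast
      qed
    qed
    have "(\<lambda>h. (inv\<^bsub>Gmn m n\<^esub> h) z2) ` ?H = (\<lambda>h. h z2) ` ((\<lambda>h. inv\<^bsub>Gmn m n\<^esub> h) ` ?H)"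
      by (simp only: image_image)
    then show ?thesis by (simp only: invH)
  qed
  finally show ?thesis .
qed

lemma G_U_stab: "G_U m n = stab m n {x0}" by (simp add: G_U_def stab_def)

lemma conj_solve: "beq (winv g @ h @ g) (apow k) \<Longrightarrow> beq h (g @ apow k @ winv g)"
proof -
  assume a: "beq (winv g @ h @ g) (apow k)"
  have "beq h ((g @ winv g) @ h @ (g @ winv g))"
    using beq_app[OF beq_sym[OF inv_r[of g]] beq_app[OF beq_refl[of h] beq_sym[OF inv_r[of g]]]] by simp
  also have "(g @ winv g) @ h @ (g @ winv g) = g @ (winv g @ h @ g) @ winv g" by simp
  also have "beq \<dots> (g @ apow k @ winv g)" by (rule beq_app3[OF a])
  finally show ?thesis .
qed

lemma orbitA: "(\<lambda>\<tau>. \<tau> (bs_coset m n g)) ` stab m n {x0} = range (\<lambda>k. bs_coset m n ([] @ apow k @ g))"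
proof
  show "(\<lambda>\<tau>. \<tau> (bs_coset m n g)) ` stab m n {x0} \<subseteq> range (\<lambda>k. bs_coset m n ([] @ apow k @ g))"
  proof
    fix C assume "C \<in> (\<lambda>\<tau>. \<tau> (bs_coset m n g)) ` stab m n {x0}"
    then obtain \<tau> where t: "\<tau> \<in> G_carrier m n" "\<tau> x0 = x0" "C = \<tau> (bs_coset m n g)"
      by (auto simp: stab_def)
    obtain h where h: "\<forall>x\<in>{x0, bs_coset m n g}. iota h x = \<tau> x"
      using approx[OF t(1), of "{x0, bs_coset m n g}"] by auto
    have "bs_coset m n h = bs_coset m n []" using h t(2) by auto
    then obtain k where k: "beq h (apow k)" unfolding coset_eq_iff by auto
    have "C = bs_coset m n (h @ g)" using h t(3) by auto
    also have "\<dots> = bs_coset m n ([] @ apow k @ g)" using coset_beq beq_app[OF k beq_refl] by simp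
    finally show "C \<in> range (\<lambda>k. bs_coset m n ([] @ apow k @ g))" by blast
  qed
next
  show "range (\<lambda>k. bs_coset m n ([] @ apow k @ g)) \<subseteq> (\<lambda>\<tau>. \<tau> (bs_coset m n g)) ` stab m n {x0}"
  proof
    fix C assume "C \<in> range (\<lambda>k. bs_coset m n ([] @ apow k @ g))"
    then obtain k where C: "C = bs_coset m n (apow k @ g)" by auto
    have "bs_coset m n (apow k) = x0" unfolding coset_eq_iff by (intro exI[of _ k]) simp
    then have "iota (apow k) x0 = x0" by simp
    then have "iota (apow k) \<in> stab m n {x0}" using iota_G by (simp add: stab_def)
    moreover have "C = iota (apow k) (bs_coset m n g)" using C by simp
    ultimately show "C \<in> (\<lambda>\<tau>. \<tau> (bs_coset m n g)) ` stab m n {x0}" by blast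
  qed
qed

lemma orbitB: "(\<lambda>\<tau>. \<tau> x0) ` stab m n {bs_coset m n g} = range (\<lambda>k. bs_coset m n (g @ apow k @ winv g))"
proof
  show "(\<lambda>\<tau>. \<tau> x0) ` stab m n {bs_coset m n g} \<subseteq> range (\<lambda>k. bs_coset m n (g @ apow k @ winv g))"
  proof
    fix C assume "C \<in> (\<lambda>\<tau>. \<tau> x0) ` stab m n {bs_coset m n g}"
    then obtain \<tau> where t: "\<tau> \<in> G_carrier m n" "\<tau> (bs_coset m n g) = bs_coset m n g" "C = \<tau> x0"
      by (auto simp: stab_def)
    obtain h where h: "\<forall>x\<in>{x0, bs_coset m n g}. iota h x = \<tau> x"
      using approx[OF t(1), of "{x0, bs_coset m n g}"] by auto
    have "bs_coset m n (h @ g) = bs_coset m n g" using h t(2) by auto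
    then obtain k where k: "beq (winv g @ h @ g) (apow k)" unfolding coset_eq_iff by auto
    have "C = bs_coset m n h" using h t(3) by auto
    also have "\<dots> = bs_coset m n (g @ apow k @ winv g)" using coset_beq conj_solve[OF k] by simp
    finally show "C \<in> range (\<lambda>k. bs_coset m n (g @ apow k @ winv g))" by blast
  qed
next
  show "range (\<lambda>k. bs_coset m n (g @ apow k @ winv g)) \<subseteq> (\<lambda>\<tau>. \<tau> x0) ` stab m n {bs_coset m n g}"
  proof
    fix C assume "C \<in> range (\<lambda>k. bs_coset m n (g @ apow k @ winv g))"
    then obtain k where C: "C = bs_coset m n (g @ apow k @ winv g)" by auto
    have "beq (winv g @ g @ apow k @ winv g @ g) ((winv g @ g) @ apow k @ (winv g @ g))" by simp
    also have "beq \<dots> ([] @ apow k @ [])" by (rule beq_app[OF inv_l beq_app[OF beq_refl inv_l]])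
    finally have "bs_coset m n (g @ apow k @ winv g @ g) = bs_coset m n g"
      unfolding coset_eq_iff by auto
    then have "iota (g @ apow k @ winv g) (bs_coset m n g) = bs_coset m n g" by simp
    then have "iota (g @ apow k @ winv g) \<in> stab m n {bs_coset m n g}" using iota_G by (simp add: stab_def)
    moreover have "C = iota (g @ apow k @ winv g) x0" using C by simp
    ultimately show "C \<in> (\<lambda>\<tau>. \<tau> x0) ` stab m n {bs_coset m n g}" by blast
  qed
qed

lemma modular_value:
  assumes s: "\<sigma> \<in> G_carrier m n" and g: "\<sigma> x0 = bs_coset m n g"
  shows "modular_fn (Gmn m n) (G_U m n) \<sigma> = \<bar>slope m n (winv g)\<bar>"
proof -
  have c: "conj_set (Gmn m n) \<sigma> (stab m n {x0}) = stab m n {bs_coset m n g}"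
    using conj_stab[OF s coset_in] g by simp
  have num: "sg_index (Gmn m n) (conj_set (Gmn m n) \<sigma> (G_U m n)) (conj_set (Gmn m n) \<sigma> (G_U m n) \<inter> G_U m n)
      = card (range (\<lambda>k. bs_coset m n (g @ apow k @ winv g)))"
    unfolding c G_U_stab using index_orbit[OF coset_in coset_in, of g "[]"] orbitB by simp
  have den: "sg_index (Gmn m n) (G_U m n) (G_U m n \<inter> conj_set (Gmn m n) \<sigma> (G_U m n))
      = card (range (\<lambda>k. bs_coset m n ([] @ apow k @ g)))"
    unfolding c G_U_stab using index_orbit[OF coset_in coset_in, of "[]" g] orbitA by simp
  show ?thesis unfolding modular_fn_def num den by (rule word_ratio)
qed

lemma image_modular:
  "modular_fn (Gmn m n) (G_U m n) ` carrier (Gmn m n)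
     = {\<bar>real_of_int m / real_of_int n\<bar> powi k | k :: int. True}"
proof
  show "modular_fn (Gmn m n) (G_U m n) ` carrier (Gmn m n) \<subseteq> {\<bar>real_of_int m / real_of_int n\<bar> powi k | k :: int. True}"
  proof
    fix r assume "r \<in> modular_fn (Gmn m n) (G_U m n) ` carrier (Gmn m n)"
    then obtain \<sigma> where s: "\<sigma> \<in> G_carrier m n" "r = modular_fn (Gmn m n) (G_U m n) \<sigma>" by auto
    obtain h where h: "\<forall>x\<in>{x0}. iota h x = \<sigma> x" using approx[OF s(1), of "{x0}"] by auto
    have "\<sigma> x0 = bs_coset m n h" using h by simp
    then have "r = \<bar>slope m n (winv h)\<bar>" using modular_value s by simp
    then show "r \<in> {\<bar>real_of_int m / real_of_int n\<bar> powi k | k :: int. True}" using slope_pow by auto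
  qed
next
  show "{\<bar>real_of_int m / real_of_int n\<bar> powi k | k :: int. True} \<subseteq> modular_fn (Gmn m n) (G_U m n) ` carrier (Gmn m n)"
  proof
    fix r assume "r \<in> {\<bar>real_of_int m / real_of_int n\<bar> powi k | k :: int. True}"
    then obtain k where k: "r = \<bar>real_of_int m / real_of_int n\<bar> powi k" by blast
    obtain w where w: "\<bar>slope m n w\<bar> = r" using slope_surj k by metis
    have "iota (winv w) x0 = bs_coset m n (winv w)" by simp
    then have "modular_fn (Gmn m n) (G_U m n) (iota (winv w)) = r"
      using modular_value[OF iota_G] w by simp
    then show "r \<in> modular_fn (Gmn m n) (G_U m n) ` carrier (Gmn m n)" using iota_G by force
  qed
qed

end

theorem lemma9p1:
  fixes m n :: int
  assumes "m \<noteq> 0" and "n \<noteq> 0"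
  shows "modular_fn (Gmn m n) (G_U m n) ` carrier (Gmn m n)
           = {\<bar>real_of_int m / real_of_int n\<bar> powi k | k :: int. True}"
proof -
  interpret BS m n using assms by unfold_locales
  show ?thesis by (rule image_modular)
qed

end
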